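(* Let $u$ be a drift function and $\alpha\in\mathbb R_+$. Then for every $x\in\mathbf X$, \[\sup_{n\in\mathbb N}\sum_{k=0}^{n}\frac{P^k(u-Pu)(x)}{(k+1)^\alpha}\le u(x).\]
   Context: $(X_n)$ Markov chain on a complete separable metric space $\mathbf X$, $\mathbb P_x$ its law from $x$, $Pf(x)=\mathbb E_xf(X_1)$. $\tau$ is a $\theta$-compatible stopping time ($\mathbb P_x(\tau=0)=0$ and $\mathbb P_x$-a.s. $\tau\ge2\Rightarrow\tau\circ\theta=\tau-1$) with $\mathbb E_x\tau<\infty$ for all $x$; $Qf(x)=\mathbb E_x[f(X_\tau)\mathbf 1_{\tau<\infty}]$. A drift function is a Borel $u:\mathbf X\to[1,\infty)$ such that $u-Pu$ is bounded below and $Qu$, $x\mapsto\mathbb E_x\tau/u(x)$ and $P(u-Pu+B_u)/(u-Pu+B_u)$ are bounded on $\mathbf X$, where $B_u=\sup(Pu-u)+1$. *)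

theory Defs
  imports "HOL-Probability.Probability"
begin

text \<open>Transition kernel K of the chain (P f (x) = E_x f(X_1) = integral of f against K x)
  and the family of path laws Px x (law of the chain started at x) on the stream space.
  The chain is X_n(omega) = omega !! n, the shift theta is stl.\<close>

definition markov_chain_laws ::
  "('a::polish_space \<Rightarrow> 'a measure) \<Rightarrow> ('a \<Rightarrow> 'a stream measure) \<Rightarrow> bool" where
  "markov_chain_laws K Px \<longleftrightarrow>
     K \<in> borel \<rightarrow>\<^sub>M prob_algebra borel \<and>
     Px \<in> borel \<rightarrow>\<^sub>M prob_algebra (stream_space borel) \<and>
     (\<forall>x. Px x = distr (K x \<bind> Px) (stream_space borel) (\<lambda>\<omega>. x ## \<omega>))"

definition Pop :: "('a \<Rightarrow> 'a measure) \<Rightarrow> ('a \<Rightarrow> real) \<Rightarrow> 'a \<Rightarrow> real" where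
  "Pop K f x = (\<integral>y. f y \<partial>K x)"

definition stopping_time_chain :: "('a::polish_space stream \<Rightarrow> enat) \<Rightarrow> bool" where
  "stopping_time_chain \<tau> \<longleftrightarrow>
     \<tau> \<in> stream_space borel \<rightarrow>\<^sub>M count_space UNIV \<and>
     (\<forall>n \<omega> \<omega>'. stake (Suc n) \<omega> = stake (Suc n) \<omega>' \<longrightarrow> (\<tau> \<omega> \<le> enat n \<longleftrightarrow> \<tau> \<omega>' \<le> enat n))"

definition theta_compatible :: "('a \<Rightarrow> 'a stream measure) \<Rightarrow> ('a stream \<Rightarrow> enat) \<Rightarrow> bool" where
  "theta_compatible Px \<tau> \<longleftrightarrow>
     (\<forall>x. (AE \<omega> in Px x. \<tau> \<omega> \<noteq> 0) \<and>
          (AE \<omega> in Px x. \<tau> \<omega> \<ge> 2 \<longrightarrow> \<tau> (stl \<omega>) = \<tau> \<omega> - 1))"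

definition Qop :: "('a \<Rightarrow> 'a stream measure) \<Rightarrow> ('a stream \<Rightarrow> enat) \<Rightarrow> ('a \<Rightarrow> real) \<Rightarrow> 'a \<Rightarrow> ennreal" where
  "Qop Px \<tau> f x = (\<integral>\<^sup>+\<omega>. (case \<tau> \<omega> of enat n \<Rightarrow> ennreal (f (\<omega> !! n)) | \<infinity> \<Rightarrow> 0) \<partial>Px x)"

definition exp_tau :: "('a \<Rightarrow> 'a stream measure) \<Rightarrow> ('a stream \<Rightarrow> enat) \<Rightarrow> 'a \<Rightarrow> ennreal" where
  "exp_tau Px \<tau> x = (\<integral>\<^sup>+\<omega>. ennreal_of_enat (\<tau> \<omega>) \<partial>Px x)"

definition B_drift :: "('a \<Rightarrow> 'a measure) \<Rightarrow> ('a \<Rightarrow> real) \<Rightarrow> real" where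
  "B_drift K u = (SUP x. Pop K u x - u x) + 1"

definition drift_function ::
  "('a::polish_space \<Rightarrow> 'a measure) \<Rightarrow> ('a \<Rightarrow> 'a stream measure) \<Rightarrow> ('a stream \<Rightarrow> enat)
    \<Rightarrow> ('a \<Rightarrow> real) \<Rightarrow> bool" where
  "drift_function K Px \<tau> u \<longleftrightarrow>
     u \<in> borel_measurable borel \<and> (\<forall>x. u x \<ge> 1) \<and>
     \<comment> \<open>u - Pu bounded below (in particular Pu is finite)\<close>
     (\<exists>c::real. \<forall>x. (\<integral>\<^sup>+y. ennreal (u y) \<partial>K x) \<le> ennreal (u x + c)) \<and>
     \<comment> \<open>Qu bounded\<close>
     (\<exists>M::real. \<forall>x. Qop Px \<tau> u x \<le> ennreal M) \<and>
     \<comment> \<open>E_x tau / u(x) bounded\<close>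
     (\<exists>M::real. \<forall>x. exp_tau Px \<tau> x \<le> ennreal (M * u x)) \<and>
     \<comment> \<open>P(u - Pu + B_u) / (u - Pu + B_u) bounded\<close>
     (\<exists>M::real. \<forall>x. (\<integral>\<^sup>+y. ennreal (u y - Pop K u y + B_drift K u) \<partial>K x)
                      \<le> ennreal (M * (u x - Pop K u x + B_drift K u)))"

end

theory Submission
  imports Defs
begin

lemma sum_by_parts_bound:
  fixes v :: "nat \<Rightarrow> real" and \<alpha> :: real
  assumes nn: "\<And>k. v k \<ge> 0" and a: "\<alpha> \<ge> 0"
  shows "(\<Sum>k\<le>n. (v k - v (Suc k)) / (real k + 1) powr \<alpha>) \<le> v 0"
proof -
  have h: "(\<Sum>k\<le>n. (v k - v (Suc k)) / (real k + 1) powr \<alpha>) + v (Suc n) / (real n + 1) powr \<alpha> \<le> v 0" for n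
  proof (induction n)
    case 0 then show ?case by simp
  next
    case (Suc n)
    have p: "(real n + 1) powr \<alpha> \<le> (real (Suc n) + 1) powr \<alpha>"
      using a by (intro powr_mono2) auto
    have pos: "(real n + 1) powr \<alpha> > 0" by simp
    have "v (Suc n) / (real (Suc n) + 1) powr \<alpha> \<le> v (Suc n) / (real n + 1) powr \<alpha>"
      using p pos nn[of "Suc n"] by (intro divide_left_mono) auto
    then show ?case using Suc.IH by (simp add: diff_divide_distrib)
  qed
  moreover have "v (Suc n) / (real n + 1) powr \<alpha> \<ge> 0" using nn by simp
  ultimately show ?thesis using h[of n] by linarith
qed

theorem mainTheorem16:
  fixes K :: "'a::polish_space \<Rightarrow> 'a measure"
    and Px :: "'a \<Rightarrow> 'a stream measure"
    and \<tau> :: "'a stream \<Rightarrow> enat"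
    and u :: "'a \<Rightarrow> real" and \<alpha> :: real
  assumes "markov_chain_laws K Px"
    and "stopping_time_chain \<tau>" and "theta_compatible Px \<tau>"
    and "\<forall>x. exp_tau Px \<tau> x < \<infinity>"
    and "drift_function K Px \<tau> u"
    and "\<alpha> \<ge> 0"
  shows "\<forall>x. (SUP n::nat. ereal (\<Sum>k\<le>n. ((Pop K ^^ k) (\<lambda>y. u y - Pop K u y)) x / (real k + 1) powr \<alpha>))
              \<le> ereal (u x)"
proof -
  have K: "K \<in> borel \<rightarrow>\<^sub>M prob_algebra borel" using assms(1) unfolding markov_chain_laws_def by blast
  have Kx: "K x \<in> space (prob_algebra borel)" for x using measurable_space[OF K] by simp
  hence PS: "prob_space (K x)" and SK: "sets (K x) = sets borel" for x by (auto simp: space_prob_algebra)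
  have BM: "borel_measurable (K x) = borel_measurable borel" for x
    by (rule measurable_cong_sets[OF SK refl])
  have um[measurable]: "u \<in> borel_measurable borel" and u1: "\<And>x. u x \<ge> 1"
    using assms(5) unfolding drift_function_def by auto
  obtain c where c: "\<And>x. (\<integral>\<^sup>+y. ennreal (u y) \<partial>K x) \<le> ennreal (u x + c)"
    using assms(5) unfolding drift_function_def by blast
  define c' where "c' = max c 0"
  have c'0: "c' \<ge> 0" by (simp add: c'_def)
  have c': "(\<integral>\<^sup>+y. ennreal (u y) \<partial>K x) \<le> ennreal (u x + c')" for x
    using c[of x] order_trans ennreal_leI by (metis add_left_mono c'_def max.cobounded1)
  have Pmeas: "Pop K f \<in> borel_measurable borel" if "f \<in> borel_measurable borel" for f
    unfolding Pop_def
    using measurable_compose[OF measurable_prob_algebraD[OF K] integral_measurable_subprob_algebra[OF that]] .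
  have uint: "integrable (K x) u" for x
  proof (rule integrableI_bounded)
    show "u \<in> borel_measurable (K x)" using BM[of x] um by blast
    have "(\<integral>\<^sup>+y. ennreal (norm (u y)) \<partial>K x) = (\<integral>\<^sup>+y. ennreal (u y) \<partial>K x)"
      using u1 by (intro nn_integral_cong) (metis abs_of_nonneg real_norm_def order_trans zero_le_one)
    also have "\<dots> < \<infinity>" using c'[of x] ennreal_less_top[of "u x + c'"] using le_less_trans by fastforce
    finally show "(\<integral>\<^sup>+y. ennreal (norm (u y)) \<partial>K x) < \<infinity>" .
  qed
  have Pu: "Pop K u x \<le> u x + c'" for x
  proof -
    have "ennreal (Pop K u x) = (\<integral>\<^sup>+y. ennreal (u y) \<partial>K x)"
      unfolding Pop_def using uint u1
      by (intro nn_integral_eq_integral[symmetric]) (auto intro: order_trans[OF zero_le_one])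
    then show ?thesis using c'[of x] u1[of x] c'0 ennreal_le_iff[of "u x + c'" "Pop K u x"] by (metis add_nonneg_nonneg order_trans zero_le_one)
  qed
  have intb: "integrable (K x) f" if "f \<in> borel_measurable borel" "\<And>y. 0 \<le> f y" "\<And>y. f y \<le> u y + C" for f x C
  proof (rule Bochner_Integration.integrable_bound)
    interpret prob_space "K x" by (rule PS)
    show "integrable (K x) (\<lambda>y. u y + C)" using uint by auto
    show "f \<in> borel_measurable (K x)" using BM[of x] that(1) by blast
    show "AE y in K x. norm (f y) \<le> norm (u y + C)"
      using that(2,3) by (auto intro!: AE_I2 order_trans[OF _ abs_ge_self])
  qed
  define v where "v k = (Pop K ^^ k) u" for k
  have vS: "v (Suc k) = Pop K (v k)" for k by (simp add: v_def)
  have inv: "v k \<in> borel_measurable borel \<and> (\<forall>y. 0 \<le> v k y \<and> v k y \<le> u y + real k * c')" for k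
  proof (induction k)
    case 0 then show ?case using u1 c'0 by (auto simp: v_def intro: order_trans[OF zero_le_one])
  next
    case (Suc k)
    then have m: "v k \<in> borel_measurable borel" and b: "\<And>y. 0 \<le> v k y" "\<And>y. v k y \<le> u y + real k * c'" by auto
    have ii: "integrable (K x) (v k)" for x using intb[OF m b] .
    have "0 \<le> v (Suc k) y" for y unfolding vS Pop_def using b by (intro integral_nonneg_AE) auto
    moreover have "v (Suc k) y \<le> u y + real (Suc k) * c'" for y
    proof -
      interpret prob_space "K y" by (rule PS)
      have "v (Suc k) y \<le> (\<integral>z. u z + real k * c' \<partial>K y)"
        unfolding vS Pop_def using ii uint b by (intro integral_mono) auto
      also have "\<dots> = Pop K u y + real k * c'" unfolding Pop_def using uint by (simp add: prob_space)
      finally show ?thesis using Pu[of y] by (simp add: algebra_simps)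
    qed
    ultimately show ?case using Pmeas[OF m] vS by simp
  qed
  have vint: "integrable (K x) (v k)" for k x
    using inv[of k] by (intro intb) auto
  have key: "(Pop K ^^ k) (\<lambda>y. u y - Pop K u y) = (\<lambda>y. v k y - v (Suc k) y)" for k
  proof (induction k)
    case 0 then show ?case by (simp add: v_def)
  next
    case (Suc k)
    have "(Pop K ^^ Suc k) (\<lambda>y. u y - Pop K u y) = Pop K (\<lambda>y. v k y - v (Suc k) y)"
      using Suc by simp
    also have "\<dots> = (\<lambda>y. v (Suc k) y - v (Suc (Suc k)) y)"
    proof (rule ext)
      fix x
      have "Pop K (\<lambda>y. v k y - v (Suc k) y) x = Pop K (v k) x - Pop K (v (Suc k)) x"
        unfolding Pop_def by (rule Bochner_Integration.integral_diff[OF vint vint])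
      then show "Pop K (\<lambda>y. v k y - v (Suc k) y) x = v (Suc k) x - v (Suc (Suc k)) x"
        by (simp only: vS)
    qed
    finally show ?case .
  qed
  show ?thesis
  proof
    fix x
    show "(SUP n::nat. ereal (\<Sum>k\<le>n. ((Pop K ^^ k) (\<lambda>y. u y - Pop K u y)) x / (real k + 1) powr \<alpha>))
              \<le> ereal (u x)"
    proof (rule SUP_least)
      fix n :: nat
      have "(\<Sum>k\<le>n. (v k x - v (Suc k) x) / (real k + 1) powr \<alpha>) \<le> v 0 x"
        using sum_by_parts_bound[of "\<lambda>k. v k x" \<alpha> n] inv assms(6) by blast
      then show "ereal (\<Sum>k\<le>n. ((Pop K ^^ k) (\<lambda>y. u y - Pop K u y)) x / (real k + 1) powr \<alpha>) \<le> ereal (u x)"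
        by (simp add: key v_def)
    qed
  qed
qed

end
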